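(* For any graph $G = (V,E)$ we have \[ \operatorname{pn}_\ell(G) \geq \max\left\{ \frac{|E(H)|}{2|V(H)|-3} \;\middle|\; H \subseteq G,\ H \neq \emptyset\right\}. \]
   Context: All graphs are finite and simple; $H \subseteq G$ ranges over nonempty subgraphs of $G$. A linear embedding of $G=(V,E)$ is a pair $(\prec,\mathcal{P})$ where $\prec$ is a total ordering of $V$ and $\mathcal{P}$ is a partition of $E$ into parts called pages. Two edges $uv, xy$ with $u\prec v$, $x \prec y$ cross if $u \prec x \prec v \prec y$ or $x \prec u \prec y \prec v$. A book embedding is a linear embedding in which no two crossing edges lie on the same page. For a book embedding and a vertex $v$, let $\mathcal{P}_v$ be the set of pages containing at least one edge incident to $v$; the embedding is $k$-local if $|\mathcal{P}_v| \le k$ for all $v$. The local page number $\operatorname{pn}_\ell(G)$ is the smallest $k$ such that $G$ admits a $k$-local book embedding (with any number of pages). *)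

theory Defs
  imports Complex_Main
begin

definition graph :: "'a set \<Rightarrow> 'a set set \<Rightarrow> bool" where
  "graph V E \<longleftrightarrow> finite V \<and>
     (\<forall>e\<in>E. \<exists>u v. u \<noteq> v \<and> u \<in> V \<and> v \<in> V \<and> e = {u, v})"

definition subgraph :: "'a set \<Rightarrow> 'a set set \<Rightarrow> 'a set \<Rightarrow> 'a set set \<Rightarrow> bool" where
  "subgraph VH EH V E \<longleftrightarrow> VH \<subseteq> V \<and> EH \<subseteq> E \<and> graph VH EH"

text \<open>The total order of the vertices is given by an injective position map pos
  (u before v iff pos u < pos v); the partition of the edges into pages is given by
  a page labelling pg (each page is a nonempty fibre of pg on E).\<close>
definition crossing :: "('a \<Rightarrow> nat) \<Rightarrow> 'a set \<Rightarrow> 'a set \<Rightarrow> bool" where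
  "crossing pos e f \<longleftrightarrow> (\<exists>u v x y. e = {u, v} \<and> f = {x, y} \<and>
      pos u < pos v \<and> pos x < pos y \<and>
      ((pos u < pos x \<and> pos x < pos v \<and> pos v < pos y) \<or>
       (pos x < pos u \<and> pos u < pos y \<and> pos y < pos v)))"

definition book_embedding ::
  "'a set \<Rightarrow> 'a set set \<Rightarrow> ('a \<Rightarrow> nat) \<Rightarrow> ('a set \<Rightarrow> nat) \<Rightarrow> bool" where
  "book_embedding V E pos pg \<longleftrightarrow> inj_on pos V \<and>
     (\<forall>e\<in>E. \<forall>f\<in>E. crossing pos e f \<longrightarrow> pg e \<noteq> pg f)"

definition pages_at :: "'a set set \<Rightarrow> ('a set \<Rightarrow> nat) \<Rightarrow> 'a \<Rightarrow> nat set" where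
  "pages_at E pg v = pg ` {e \<in> E. v \<in> e}"

definition k_local :: "'a set \<Rightarrow> 'a set set \<Rightarrow> ('a set \<Rightarrow> nat) \<Rightarrow> nat \<Rightarrow> bool" where
  "k_local V E pg k \<longleftrightarrow> (\<forall>v\<in>V. card (pages_at E pg v) \<le> k)"

definition local_page_number :: "'a set \<Rightarrow> 'a set set \<Rightarrow> nat" where
  "local_page_number V E =
     (LEAST k. \<exists>pos pg. book_embedding V E pos pg \<and> k_local V E pg k)"

end

theory Submission
  imports Defs
begin

lemma nc_mono:
  assumes "\<forall>(a,b)\<in>F. \<forall>(c,d)\<in>F. \<not>((a::nat)<c \<and> c<b \<and> b<d)" "G \<subseteq> F"
  shows "\<forall>(a,b)\<in>G. \<forall>(c,d)\<in>G. \<not>(a<c \<and> c<b \<and> b<d)"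
proof (intro ballI, clarify)
  fix a b c d assume "(a,b) \<in> G" "(c,d) \<in> G" "a<c" "c<b" "b<d"
  then have "(a,b) \<in> F" "(c,d) \<in> F" using assms(2) by auto
  then show False using assms(1) \<open>a<c\<close> \<open>c<b\<close> \<open>b<d\<close> by fastforce
qed

lemma outer:
  fixes S :: "nat set" and F :: "(nat \<times> nat) set"
  assumes "finite S" "F \<subseteq> {(x,y). x\<in>S \<and> y\<in>S \<and> x<y}"
    "\<forall>(a,b)\<in>F. \<forall>(c,d)\<in>F. \<not>(a<c \<and> c<b \<and> b<d)" "2 \<le> card S"
  shows "card F + 3 \<le> 2 * card S"
  using assms
proof (induction "card S" arbitrary: S F rule: less_induct)
  case less
  note fS = less.prems(1) and FS = less.prems(2) and nc = less.prems(3) and c2 = less.prems(4)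
  have ne: "S \<noteq> {}" using c2 by auto
  define a where "a = Min S"
  define b where "b = Max S"
  have aS: "a \<in> S" and bS: "b \<in> S" using fS ne a_def b_def by auto
  have amin: "\<And>x. x \<in> S \<Longrightarrow> a \<le> x" using fS a_def by auto
  have bmax: "\<And>x. x \<in> S \<Longrightarrow> x \<le> b" using fS b_def by auto
  have ab: "a < b"
  proof (rule ccontr)
    assume "\<not> a < b"
    then have "S \<subseteq> {a}" using amin bmax by force
    then have "card S \<le> card {a}" by (intro card_mono) auto
    then have "card S \<le> 1" by simp
    then show False using c2 by simp
  qed
  have "F \<subseteq> S \<times> S" using FS by auto
  then have fF: "finite F" using fS finite_subset by blast
  show ?case
  proof (cases "\<exists>y. (a,y) \<in> F \<and> y \<noteq> b")
    case True
    define Y where "Y = {y. (a,y) \<in> F \<and> y \<noteq> b}"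
    have "Y \<subseteq> S" using FS unfolding Y_def by auto
    then have fY: "finite Y" using fS finite_subset by blast
    have Yne: "Y \<noteq> {}" using True Y_def by auto
    define c where "c = Max Y"
    have cY: "c \<in> Y" using fY Yne c_def by auto
    have cmax: "\<And>y. (a,y) \<in> F \<Longrightarrow> y \<noteq> b \<Longrightarrow> y \<le> c" using fY c_def Y_def by auto
    have acF: "(a,c) \<in> F" and cb: "c \<noteq> b" using cY Y_def by auto
    have cS: "c \<in> S" and ac: "a < c" using acF FS by auto
    have cb': "c < b" using cS bmax cb by force
    define S1 where "S1 = {x\<in>S. x \<le> c}"
    define S2 where "S2 = {x\<in>S. c \<le> x}"
    define F1 where "F1 = {(x,y)\<in>F. y \<le> c}"
    define F2 where "F2 = {(x,y)\<in>F. c \<le> x}"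
    have cover: "F \<subseteq> F1 \<union> F2 \<union> {(a,b)}"
    proof
      fix p assume pF: "p \<in> F"
      obtain x y where p: "p = (x,y)" by force
      show "p \<in> F1 \<union> F2 \<union> {(a,b)}"
      proof (rule ccontr)
        assume nin: "p \<notin> F1 \<union> F2 \<union> {(a,b)}"
        then have xc: "x < c" and cy: "c < y" using pF p F1_def F2_def by auto
        have xS: "x \<in> S" using pF p FS by auto
        show False
        proof (cases "x = a")
          case True
          then have "y \<noteq> b" using nin p by auto
          then have "y \<le> c" using cmax pF p True by auto
          then show False using cy by simp
        next
          case False
          then have "a < x" using amin xS by force
          then show False using nc acF pF p xc cy by fastforce
        qed
      qed
    qed
    have disj: "F1 \<inter> F2 = {}" using FS F1_def F2_def by auto
    have sub12: "F1 \<subseteq> F" "F2 \<subseteq> F" using F1_def F2_def by auto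
    then have fF1: "finite F1" "finite F2" using fF finite_subset by blast+
    have "card F \<le> card (F1 \<union> F2 \<union> {(a,b)})"
      using cover fF1 by (intro card_mono) auto
    also have "\<dots> \<le> card (F1 \<union> F2) + 1"
      using card_Un_le[of "F1 \<union> F2" "{(a,b)}"] by simp
    also have "card (F1 \<union> F2) = card F1 + card F2" using disj fF1 card_Un_disjoint by blast
    finally have cF: "card F \<le> card F1 + card F2 + 1" .
    have fS12: "finite S1" "finite S2" using fS S1_def S2_def by auto
    have U: "S1 \<union> S2 = S" using S1_def S2_def by auto
    have I: "S1 \<inter> S2 = {c}" using S1_def S2_def cS by auto
    have sumc: "card S1 + card S2 = card S + 1"
      using card_Un_Int[OF fS12] U I by simp
    have "b \<notin> S1" using S1_def cb' by auto
    then have "S1 \<subset> S" using S1_def bS by blast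
    then have l1: "card S1 < card S" using fS by (intro psubset_card_mono) auto
    have "a \<notin> S2" using S2_def ac by auto
    then have "S2 \<subset> S" using S2_def aS by blast
    then have l2: "card S2 < card S" using fS by (intro psubset_card_mono) auto
    have g1: "2 \<le> card S1"
    proof -
      have "{a,c} \<subseteq> S1" using S1_def aS cS ac by auto
      then have "card {a,c} \<le> card S1" using fS12 by (intro card_mono) auto
      then show ?thesis using ac by simp
    qed
    have g2: "2 \<le> card S2"
    proof -
      have "{c,b} \<subseteq> S2" using S2_def bS cS cb' by auto
      then have "card {c,b} \<le> card S2" using fS12 by (intro card_mono) auto
      then show ?thesis using cb' by simp
    qed
    have IH1: "card F1 + 3 \<le> 2 * card S1"
    proof (rule less.hyps[OF l1 fS12(1)])
      show "F1 \<subseteq> {(x,y). x\<in>S1 \<and> y\<in>S1 \<and> x<y}" using FS unfolding F1_def S1_def by auto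
      show "\<forall>(a,b)\<in>F1. \<forall>(c,d)\<in>F1. \<not>(a<c \<and> c<b \<and> b<d)" using nc_mono[OF nc sub12(1)] .
      show "2 \<le> card S1" using g1 .
    qed
    have IH2: "card F2 + 3 \<le> 2 * card S2"
    proof (rule less.hyps[OF l2 fS12(2)])
      show "F2 \<subseteq> {(x,y). x\<in>S2 \<and> y\<in>S2 \<and> x<y}" using FS unfolding F2_def S2_def by auto
      show "\<forall>(a,b)\<in>F2. \<forall>(c,d)\<in>F2. \<not>(a<c \<and> c<b \<and> b<d)" using nc_mono[OF nc sub12(2)] .
      show "2 \<le> card S2" using g2 .
    qed
    show ?thesis using cF IH1 IH2 sumc by linarith
  next
    case False
    define S' where "S' = S - {a}"
    define F' where "F' = F - {(a,b)}"
    have F'S: "F' \<subseteq> {(x,y). x\<in>S' \<and> y\<in>S' \<and> x<y}"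
    proof
      fix p assume "p \<in> F'"
      then have pF: "p \<in> F" "p \<noteq> (a,b)" unfolding F'_def by auto
      obtain x y where p0: "p = (x,y)" by (cases p)
      have p: "p = (x,y)" "(x,y) \<in> F" "(x,y) \<noteq> (a,b)" using pF p0 by auto
      then have "x \<in> S" "y \<in> S" "x < y" using FS by auto
      moreover have "x \<noteq> a" using False p by auto
      moreover have "y \<noteq> a" using amin `x \<in> S` `x<y` by force
      ultimately show "p \<in> {(x,y). x\<in>S' \<and> y\<in>S' \<and> x<y}" using p S'_def by auto
    qed
    have subF': "F' \<subseteq> F" unfolding F'_def by blast
    have cS': "card S' = card S - 1" using S'_def aS fS by auto
    have "card F \<le> card (insert (a,b) F')" using F'_def fF by (intro card_mono) auto
    also have "\<dots> \<le> card F' + 1" using subF' fF finite_subset[OF subF' fF] by (simp add: card_insert_if)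
    finally have cF: "card F \<le> card F' + 1" .
    show ?thesis
    proof (cases "2 \<le> card S'")
      case True
      have "card F' + 3 \<le> 2 * card S'"
      proof (rule less.hyps[of S' F'])
        show "card S' < card S" using cS' c2 by simp
        show "finite S'" using fS S'_def by simp
        show "F' \<subseteq> {(x,y). x\<in>S' \<and> y\<in>S' \<and> x<y}" using F'S .
        show "\<forall>(a,b)\<in>F'. \<forall>(c,d)\<in>F'. \<not>(a<c \<and> c<b \<and> b<d)" using nc_mono[OF nc subF'] .
        show "2 \<le> card S'" using True .
      qed
      then show ?thesis using cF cS' c2 by linarith
    next
      case f2: False
      have "F' = {}"
      proof (rule ccontr)
        assume "F' \<noteq> {}"
        then obtain x y where "(x,y) \<in> F'" by auto
        then have "x \<in> S'" "y \<in> S'" "x \<noteq> y" using F'S by auto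
        then have "card {x,y} \<le> card S'" using fS S'_def by (intro card_mono) auto
        then show False using f2 `x\<noteq>y` by simp
      qed
      then show ?thesis using cF c2 by simp
    qed
  qed
qed


lemma sum_card_swap:
  assumes "finite A" "finite B"
  shows "(\<Sum>a\<in>A. card {b\<in>B. R a b}) = (\<Sum>b\<in>B. card {a\<in>A. R a b})"
proof -
  have 1: "\<And>a. card {b\<in>B. R a b} = (\<Sum>b\<in>B. if R a b then 1 else 0)"
    using assms(2) by (simp add: sum.If_cases Int_def)
  have 2: "\<And>b. card {a\<in>A. R a b} = (\<Sum>a\<in>A. if R a b then 1 else 0)"
    using assms(1) by (simp add: sum.If_cases Int_def)
  show ?thesis unfolding 1 2 by (rule sum.swap)
qed

lemma crossing_irrefl: "\<not> crossing pos e e"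
  unfolding crossing_def by (auto simp: doubleton_eq_iff)

lemma crossingI:
  assumes "e = {u,v}" "f = {x,y}" "pos u < pos v" "pos x < pos y"
    "pos u < pos x" "pos x < pos v" "pos v < pos y"
  shows "crossing pos e f"
  unfolding crossing_def using assms by blast

lemma page_bound:
  fixes pos :: "'a \<Rightarrow> nat"
  assumes inj: "inj_on pos W" and fW: "finite W"
    and edges: "\<forall>e\<in>Ep. \<exists>u v. u \<noteq> v \<and> u\<in>W \<and> v\<in>W \<and> e = {u,v}"
    and ne: "Ep \<noteq> {}"
    and nc: "\<forall>e\<in>Ep. \<forall>f\<in>Ep. \<not> crossing pos e f"
  shows "card Ep + 3 \<le> 2 * card {v\<in>W. \<exists>e\<in>Ep. v\<in>e}"
proof -
  define U where "U = {v\<in>W. \<exists>e\<in>Ep. v\<in>e}"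
  define ep where "ep = (\<lambda>e. (Min (pos ` e), Max (pos ` e)))"
  have UW: "U \<subseteq> W" unfolding U_def by auto
  have epv: "ep {u,v} = (min (pos u) (pos v), max (pos u) (pos v))" for u v
    unfolding ep_def by simp
  have img: "pos ` e = {fst (ep e), snd (ep e)}" and lt: "fst (ep e) < snd (ep e)"
    and eW: "e \<subseteq> U" if "e \<in> Ep" for e
  proof -
    have "\<exists>u v. u \<noteq> v \<and> u\<in>W \<and> v\<in>W \<and> e = {u,v}" by (rule bspec[OF edges that])
    then obtain u v where uv: "u \<noteq> v" "u\<in>W" "v\<in>W" "e = {u,v}" by iprover
    have "pos u \<noteq> pos v" using inj uv by (metis inj_on_eq_iff)
    then show "pos ` e = {fst (ep e), snd (ep e)}" "fst (ep e) < snd (ep e)"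
      using uv(4) epv[of u v] by (auto simp: min_def max_def)
    show "e \<subseteq> U" using uv that unfolding U_def by auto
  qed
  have injep: "inj_on ep Ep"
  proof (rule inj_onI)
    fix e f assume ef: "e \<in> Ep" "f \<in> Ep" "ep e = ep f"
    then have "pos ` e = pos ` f" using img[OF ef(1)] img[OF ef(2)] by simp
    moreover have "e \<subseteq> W" "f \<subseteq> W" using eW ef UW by blast+
    ultimately show "e = f" using inj_on_image_eq_iff[OF inj] by blast
  qed
  define F where "F = ep ` Ep"
  define S where "S = pos ` U"
  have cF: "card F = card Ep" unfolding F_def using injep by (rule card_image)
  have cS: "card S = card U" unfolding S_def using inj_on_subset[OF inj UW] by (rule card_image)
  have fU: "finite U" using fW UW finite_subset by blast
  have fS: "finite S" unfolding S_def using fU by simp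
  have FS: "F \<subseteq> {(x,y). x\<in>S \<and> y\<in>S \<and> x<y}"
  proof
    fix p assume "p \<in> F"
    then obtain e where e: "e \<in> Ep" "p = ep e" unfolding F_def by blast
    have "fst p \<in> S" "snd p \<in> S" using img[OF e(1)] eW[OF e(1)] e(2) unfolding S_def by blast+
    moreover have "fst p < snd p" using lt e by simp
    ultimately show "p \<in> {(x,y). x\<in>S \<and> y\<in>S \<and> x<y}" by (cases p) auto
  qed
  have two: "\<exists>u v. u \<in> e \<and> v \<in> e \<and> pos u = fst (ep e) \<and> pos v = snd (ep e) \<and> e = {u,v}"
    if "e \<in> Ep" for e
  proof -
    have "\<exists>u v. u \<noteq> v \<and> u\<in>W \<and> v\<in>W \<and> e = {u,v}" by (rule bspec[OF edges that])
    then obtain u v where uv: "u \<noteq> v" "u\<in>W" "v\<in>W" "e = {u,v}" by iprover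
    have h1: "fst (ep e) \<in> pos ` e" and h2: "snd (ep e) \<in> pos ` e" using img[OF that] by auto
    obtain u' where u': "fst (ep e) = pos u'" "u' \<in> e" using h1 by (rule imageE)
    obtain v' where v': "snd (ep e) = pos v'" "v' \<in> e" using h2 by (rule imageE)
    have "u' \<in> e" "v' \<in> e" "pos u' = fst (ep e)" "pos v' = snd (ep e)" using u' v' by simp_all
    moreover have "u' \<noteq> v'" using lt[OF that] calculation by auto
    ultimately have "e = {u',v'}" using uv(4) by auto
    with \<open>u' \<in> e\<close> \<open>v' \<in> e\<close> \<open>pos u' = fst (ep e)\<close> \<open>pos v' = snd (ep e)\<close> show ?thesis by blast
  qed
  have ncF: "\<forall>(a,b)\<in>F. \<forall>(c,d)\<in>F. \<not>(a<c \<and> c<b \<and> b<d)"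
  proof (intro ballI, clarify)
    fix a b c d assume ab: "(a,b) \<in> F" and cd: "(c,d) \<in> F" and o: "a<c" "c<b" "b<d"
    obtain e where e: "e \<in> Ep" "(a,b) = ep e" using ab unfolding F_def by blast
    obtain f where f: "f \<in> Ep" "(c,d) = ep f" using cd unfolding F_def by blast
    have ea: "fst (ep e) = a" "snd (ep e) = b" using e(2) by (simp_all add: e(2)[symmetric])
    have fa: "fst (ep f) = c" "snd (ep f) = d" using f(2) by (simp_all add: f(2)[symmetric])
    obtain u v where uv: "pos u = a" "pos v = b" "e = {u,v}" using two[OF e(1)] unfolding ea by blast
    obtain x y where xy: "pos x = c" "pos y = d" "f = {x,y}" using two[OF f(1)] unfolding fa by blast
    have "crossing pos e f"
      by (rule crossingI[OF uv(3) xy(3)]) (use uv xy o in auto)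
    then show False using nc e f by blast
  qed
  have c2: "2 \<le> card S"
  proof -
    obtain e where e: "e \<in> Ep" using ne by blast
    have "fst (ep e) \<in> S" "snd (ep e) \<in> S" using img[OF e] eW[OF e] unfolding S_def by blast+
    then have "{fst (ep e), snd (ep e)} \<subseteq> S" by blast
    then have "card {fst (ep e), snd (ep e)} \<le> card S" using fS by (rule card_mono[rotated])
    then show ?thesis using lt[OF e] by simp
  qed
  have "card F + 3 \<le> 2 * card S" by (rule outer[OF fS FS ncF c2])
  then show ?thesis using cF cS unfolding U_def by simp
qed


lemma nat_bound:
  fixes h P n k m :: nat
  assumes "h + 3 * P \<le> 2 * n * m" "m \<le> P" "m \<le> k" "2 \<le> n"
  shows "real h \<le> real k * (2 * real n - 3)"
proof -
  have "h + 3 * m \<le> 2 * n * m" using assms(1,2) by linarith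
  then have r1: "real h + 3 * real m \<le> 2 * real n * real m"
    by (metis of_nat_add of_nat_le_iff of_nat_mult of_nat_numeral)
  have "real m * (2 * real n - 3) \<le> real k * (2 * real n - 3)"
    using assms(3,4) by (intro mult_right_mono) auto
  then show ?thesis using r1 by (simp add: algebra_simps)
qed

theorem lemma1:
  fixes V :: "'a set" and E :: "'a set set"
  assumes "graph V E"
  shows "\<forall>VH EH. subgraph VH EH V E \<and> VH \<noteq> {} \<longrightarrow>
           real (local_page_number V E) \<ge> real (card EH) / (2 * real (card VH) - 3)"
proof (intro allI impI, elim conjE)
  fix VH EH assume sub: "subgraph VH EH V E" and ne: "VH \<noteq> {}"
  have fV: "finite V" using assms unfolding graph_def by (rule conjunct1)
  have edgesG: "\<forall>e\<in>E. \<exists>u v. u \<noteq> v \<and> u\<in>V \<and> v\<in>V \<and> e = {u,v}"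
    using assms unfolding graph_def by (rule conjunct2)
  have EV: "E \<subseteq> Pow V"
  proof
    fix e assume "e \<in> E"
    have "\<exists>u v. u \<noteq> v \<and> u\<in>V \<and> v\<in>V \<and> e = {u,v}" by (rule bspec[OF edgesG \<open>e \<in> E\<close>])
    then obtain u v where "u\<in>V" "v\<in>V" "e = {u,v}" by iprover
    then show "e \<in> Pow V" by simp
  qed
  have fE: "finite E" using EV fV by (meson finite_Pow_iff finite_subset)
  obtain pos0 :: "'a \<Rightarrow> nat" and n0 where pos0: "inj_on pos0 V"
    using finite_imp_inj_to_nat_seg[OF fV] by blast
  obtain pg0 :: "'a set \<Rightarrow> nat" and n1 where pg0: "inj_on pg0 E"
    using finite_imp_inj_to_nat_seg[OF fE] by blast
  have "book_embedding V E pos0 pg0"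
    unfolding book_embedding_def
  proof (intro conjI pos0 ballI impI)
    fix e f assume "e \<in> E" "f \<in> E" "crossing pos0 e f"
    then have "e \<noteq> f" using crossing_irrefl by metis
    then show "pg0 e \<noteq> pg0 f" using pg0 \<open>e \<in> E\<close> \<open>f \<in> E\<close> by (meson inj_on_eq_iff)
  qed
  moreover have "k_local V E pg0 (card E)"
    unfolding k_local_def pages_at_def
  proof
    fix v assume "v \<in> V"
    have "card (pg0 ` {e \<in> E. v \<in> e}) \<le> card {e \<in> E. v \<in> e}" using fE by (intro card_image_le) simp
    also have "\<dots> \<le> card E" using fE by (intro card_mono) auto
    finally show "card (pg0 ` {e \<in> E. v \<in> e}) \<le> card E" .
  qed
  ultimately have ex: "\<exists>k pos pg. book_embedding V E pos pg \<and> k_local V E pg k" by blast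
  define k where "k = local_page_number V E"
  have "\<exists>pos pg. book_embedding V E pos pg \<and> k_local V E pg k"
    unfolding k_def local_page_number_def using ex by (rule LeastI_ex)
  then obtain pos pg where be: "book_embedding V E pos pg" and kl: "k_local V E pg k" by blast
  have VHV: "VH \<subseteq> V" and EHE: "EH \<subseteq> E" and gH: "graph VH EH" using sub unfolding subgraph_def by auto
  have fVH: "finite VH" using VHV fV finite_subset by blast
  have fEH: "finite EH" using EHE fE finite_subset by blast
  have edgesH: "\<forall>e\<in>EH. \<exists>u v. u \<noteq> v \<and> u\<in>VH \<and> v\<in>VH \<and> e = {u,v}"
    using gH unfolding graph_def by (rule conjunct2)
  define n where "n = card VH"
  have n1: "1 \<le> n" using fVH ne n_def by (simp add: Suc_le_eq card_gt_0_iff)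
  show "real (card EH) / (2 * real (card VH) - 3) \<le> real (local_page_number V E)"
  proof (cases "n = 1")
    case True
    have "EH = {}"
    proof (rule ccontr)
      assume "EH \<noteq> {}"
      then obtain e where "e \<in> EH" by blast
      have "\<exists>u v. u \<noteq> v \<and> u\<in>VH \<and> v\<in>VH \<and> e = {u,v}" by (rule bspec[OF edgesH \<open>e \<in> EH\<close>])
      then obtain u v where "u \<noteq> v" "u\<in>VH" "v\<in>VH" by iprover
      then have "card {u,v} \<le> card VH" using fVH by (intro card_mono) auto
      then show False using True n_def \<open>u \<noteq> v\<close> by simp
    qed
    then show ?thesis by simp
  next
    case False
    then have n2: "2 \<le> n" using n1 by simp
    define P where "P = pg ` EH"
    define Ep where "Ep = (\<lambda>p. {e\<in>EH. pg e = p})"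
    define Up where "Up = (\<lambda>p. {v\<in>VH. \<exists>e\<in>Ep p. v\<in>e})"
    define c where "c = (\<lambda>v. card (pages_at EH pg v))"
    have fP: "finite P" unfolding P_def using fEH by simp
    have injpos: "inj_on pos VH" using be VHV unfolding book_embedding_def by (meson inj_on_subset)
    have s1: "card EH = (\<Sum>p\<in>P. card (Ep p))"
    proof -
      have "EH = (\<Union>p\<in>P. Ep p)" unfolding P_def Ep_def by auto
      moreover have "card (\<Union>p\<in>P. Ep p) = (\<Sum>p\<in>P. card (Ep p))"
        using fP fEH unfolding Ep_def by (intro card_UN_disjoint) auto
      ultimately show ?thesis by simp
    qed
    have s2: "card (Ep p) + 3 \<le> 2 * card (Up p)" if "p \<in> P" for p
      unfolding Up_def
    proof (rule page_bound[OF injpos fVH])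
      show "\<forall>e\<in>Ep p. \<exists>u v. u \<noteq> v \<and> u\<in>VH \<and> v\<in>VH \<and> e = {u,v}"
        using edgesH unfolding Ep_def by simp
      show "Ep p \<noteq> {}" using that unfolding P_def Ep_def by blast
      show "\<forall>e\<in>Ep p. \<forall>f\<in>Ep p. \<not> crossing pos e f"
      proof (intro ballI notI)
        fix e f assume "e \<in> Ep p" "f \<in> Ep p" "crossing pos e f"
        then have "e \<in> E" "f \<in> E" "pg e = pg f" using EHE unfolding Ep_def by auto
        then show False using be \<open>crossing pos e f\<close> unfolding book_embedding_def by blast
      qed
    qed
    have s3: "(\<Sum>p\<in>P. card (Up p)) = (\<Sum>v\<in>VH. c v)"
    proof -
      have "(\<Sum>p\<in>P. card (Up p)) = (\<Sum>p\<in>P. card {v\<in>VH. \<exists>e\<in>EH. pg e = p \<and> v \<in> e})"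
        unfolding Up_def Ep_def by (intro sum.cong refl arg_cong[where f=card]) auto
      also have "\<dots> = (\<Sum>v\<in>VH. card {p\<in>P. \<exists>e\<in>EH. pg e = p \<and> v \<in> e})"
        by (rule sum_card_swap[OF fP fVH])
      also have "\<dots> = (\<Sum>v\<in>VH. c v)"
        unfolding c_def pages_at_def P_def by (intro sum.cong refl arg_cong[where f=card]) (auto simp: image_iff; metis)
      finally show ?thesis .
    qed
    define m where "m = min k (card P)"
    have cv: "c v \<le> m" if "v \<in> VH" for v
    proof -
      have sub1: "pages_at EH pg v \<subseteq> pages_at E pg v" unfolding pages_at_def using EHE by auto
      have fin1: "finite (pages_at E pg v)" unfolding pages_at_def using fE by simp
      have "c v \<le> card (pages_at E pg v)" unfolding c_def using sub1 fin1 by (rule card_mono[rotated])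
      also have "\<dots> \<le> k" using kl that VHV unfolding k_local_def by auto
      finally have a: "c v \<le> k" .
      have "pages_at EH pg v \<subseteq> P" unfolding pages_at_def P_def by auto
      then have b: "c v \<le> card P" unfolding c_def using fP by (rule card_mono[rotated])
      show ?thesis using a b m_def by simp
    qed
    have "card EH + 3 * card P = (\<Sum>p\<in>P. card (Ep p) + 3)" using s1 by (simp add: sum.distrib)
    also have "\<dots> \<le> (\<Sum>p\<in>P. 2 * card (Up p))" using s2 by (intro sum_mono) auto
    also have "\<dots> = 2 * (\<Sum>v\<in>VH. c v)" by (simp only: sum_distrib_left[symmetric] s3)
    also have "\<dots> \<le> 2 * (n * m)" using sum_bounded_above[of VH c m] cv n_def by simp
    finally have main: "card EH + 3 * card P \<le> 2 * n * m" by simp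
    have "real (card EH) \<le> real k * (2 * real n - 3)"
      by (rule nat_bound[OF main]) (use m_def n2 in auto)
    moreover have "0 < 2 * real n - 3" using n2 by simp
    ultimately show ?thesis unfolding k_def n_def by (simp add: divide_le_eq mult.commute)
  qed
qed

end
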